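(* For every finite hypergraph $H$, $\mathrm{ch}_{um}(H)\le\Delta(H)+1$.
   Context: A hypergraph $H=(V,\mathcal E)$ has finite vertex set and nonempty hyperedges. $\Delta(H)$ is the maximum, over $v\in V$, of the number of hyperedges containing $v$. A coloring $C\colon V\to\mathbb Z_{>0}$ is unique-maximum if in every hyperedge the maximum color is attained by exactly one vertex. The um-choice number $\mathrm{ch}_{um}(H)$ is the minimum $k$ such that for every family $\{L_v\}_{v\in V}$ of sets of positive integers with $|L_v|\ge k$ there is a unique-maximum coloring $C$ with $C(v)\in L_v$ for all $v$. *)

theory Defs
  imports Main
begin

definition hypergraph :: "'a set \<Rightarrow> 'a set set \<Rightarrow> bool" where
  "hypergraph V E \<longleftrightarrow> (\<forall>e\<in>E. e \<noteq> {} \<and> e \<subseteq> V)"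

definition max_degree :: "'a set \<Rightarrow> 'a set set \<Rightarrow> nat" where
  "max_degree V E = Max (insert 0 ((\<lambda>v. card {e\<in>E. v \<in> e}) ` V))"

definition um_coloring :: "'a set \<Rightarrow> 'a set set \<Rightarrow> ('a \<Rightarrow> nat) \<Rightarrow> bool" where
  "um_coloring V E C \<longleftrightarrow> (\<forall>v\<in>V. C v > 0) \<and>
     (\<forall>e\<in>E. \<exists>!v. v \<in> e \<and> C v = Max (C ` e))"

definition list_size_ge :: "nat set \<Rightarrow> nat \<Rightarrow> bool" where
  "list_size_ge L k \<longleftrightarrow> infinite L \<or> k \<le> card L"

definition um_choosable :: "'a set \<Rightarrow> 'a set set \<Rightarrow> nat \<Rightarrow> bool" where
  "um_choosable V E k \<longleftrightarrow>
     (\<forall>L :: 'a \<Rightarrow> nat set. (\<forall>v\<in>V. L v \<subseteq> {0<..} \<and> list_size_ge (L v) k) \<longrightarrow>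
        (\<exists>C. um_coloring V E C \<and> (\<forall>v\<in>V. C v \<in> L v)))"

definition ch_um :: "'a set \<Rightarrow> 'a set set \<Rightarrow> nat" where
  "ch_um V E = (LEAST k. um_choosable V E k)"

end

theory Submission
  imports Defs
begin

lemma key:
  assumes "finite V"
  shows "\<forall>E L. hypergraph V E \<and> (\<forall>v\<in>V. L v \<subseteq> {0<..} \<and> (infinite (L v) \<or> card {e\<in>E. v\<in>e} < card (L v)))
     \<longrightarrow> (\<exists>C. um_coloring V E C \<and> (\<forall>v\<in>V. C v \<in> L v))"
  using assms
proof (induction V rule: finite_induct)
  case empty
  show ?case
  proof (intro allI impI)
    fix E :: "'a set set" and L :: "'a \<Rightarrow> nat set"
    assume "hypergraph {} E \<and> (\<forall>v\<in>{}. L v \<subseteq> {0<..} \<and> (infinite (L v) \<or> card {e\<in>E. v\<in>e} < card (L v)))"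
    then have "E = {}" unfolding hypergraph_def by blast
    then show "\<exists>C. um_coloring {} E C \<and> (\<forall>v\<in>{}. C v \<in> L v)"
      unfolding um_coloring_def by auto
  qed
next
  case (insert v F)
  show ?case
  proof (intro allI impI)
    fix E :: "'a set set" and L :: "'a \<Rightarrow> nat set"
    assume A: "hypergraph (insert v F) E \<and> (\<forall>u\<in>insert v F. L u \<subseteq> {0<..} \<and> (infinite (L u) \<or> card {e\<in>E. u\<in>e} < card (L u)))"
    have hE: "\<forall>e\<in>E. e \<noteq> {} \<and> e \<subseteq> insert v F" using A unfolding hypergraph_def by blast
    have finE: "finite E"
    proof -
      have "E \<subseteq> Pow (insert v F)" using hE by blast
      then show ?thesis using insert(1) by (meson finite_Pow_iff finite_insert rev_finite_subset)
    qed
    define E' where "E' = (\<lambda>e. e - {v}) ` {e\<in>E. e - {v} \<noteq> {}}"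
    have hE': "hypergraph F E'" unfolding hypergraph_def E'_def using hE by blast
    have degE': "infinite (L u) \<or> card {e\<in>E'. u\<in>e} < card (L u)" if "u \<in> F" for u
    proof -
      have "{e\<in>E'. u\<in>e} \<subseteq> (\<lambda>e. e - {v}) ` {e\<in>E. u\<in>e}" unfolding E'_def by auto
      then have "card {e\<in>E'. u\<in>e} \<le> card ((\<lambda>e. e - {v}) ` {e\<in>E. u\<in>e})"
        using finE by (intro card_mono) auto
      also have "\<dots> \<le> card {e\<in>E. u\<in>e}" by (rule card_image_le) (use finE in auto)
      finally have le1: "card {e\<in>E'. u\<in>e} \<le> card {e\<in>E. u\<in>e}" .
      have "u \<in> insert v F" using that by simp
      then have "infinite (L u) \<or> card {e\<in>E. u\<in>e} < card (L u)" using A by blast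
      then show ?thesis using le1 by linarith
    qed
    have LF: "\<forall>u\<in>F. L u \<subseteq> {0<..} \<and> (infinite (L u) \<or> card {e\<in>E'. u\<in>e} < card (L u))"
    proof
      fix u assume u: "u \<in> F"
      then have "L u \<subseteq> {0<..}" using A by blast
      then show "L u \<subseteq> {0<..} \<and> (infinite (L u) \<or> card {e\<in>E'. u\<in>e} < card (L u))"
        using degE'[OF u] by blast
    qed
    have "\<exists>C. um_coloring F E' C \<and> (\<forall>u\<in>F. C u \<in> L u)"
      using insert(3) hE' LF by (elim allE[of _ E'] allE[of _ L]) (erule impE, rule conjI)
    then obtain C where C: "um_coloring F E' C" "\<forall>u\<in>F. C u \<in> L u" by blast
    define Fb where "Fb = (\<lambda>e. Max (C ` (e - {v}))) ` {e\<in>E. v \<in> e \<and> e - {v} \<noteq> {}}"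
    have finFb: "finite Fb" unfolding Fb_def using finE by auto
    have cardFb: "card Fb \<le> card {e\<in>E. v \<in> e}"
    proof -
      have "card Fb \<le> card {e\<in>E. v \<in> e \<and> e - {v} \<noteq> {}}" unfolding Fb_def
        by (rule card_image_le) (use finE in auto)
      also have "\<dots> \<le> card {e\<in>E. v \<in> e}" by (rule card_mono) (use finE in auto)
      finally show ?thesis .
    qed
    have "L v - Fb \<noteq> {}"
    proof
      assume "L v - Fb = {}"
      then have sub: "L v \<subseteq> Fb" by blast
      then have "finite (L v)" using finFb finite_subset by blast
      then have "card {e\<in>E. v\<in>e} < card (L v)" using A by auto
      moreover have "card (L v) \<le> card Fb" using sub finFb card_mono by blast
      ultimately show False using cardFb by linarith
    qed
    then obtain c where c: "c \<in> L v" "c \<notin> Fb" by blast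
    define C' where "C' = C(v := c)"
    have colors: "\<forall>u\<in>insert v F. C' u \<in> L u" using C(2) c insert(2) unfolding C'_def by auto
    have pos: "\<forall>u\<in>insert v F. C' u > 0" proof
      fix u assume "u \<in> insert v F"
      then have "C' u \<in> L u" "L u \<subseteq> {0<..}" using colors A by auto
      then show "C' u > 0" by auto
    qed
    have edge: "\<exists>!x. x \<in> e \<and> C' x = Max (C' ` e)" if e: "e \<in> E" for e
    proof (cases "v \<in> e")
      case False
      then have "e \<in> E'" unfolding E'_def using hE e by (intro image_eqI[of _ _ e]) auto
      then have u: "\<exists>!x. x \<in> e \<and> C x = Max (C ` e)" using C(1) unfolding um_coloring_def by blast
      have "C' ` e = C ` e" unfolding C'_def using False by auto
      moreover have "\<forall>x\<in>e. C' x = C x" unfolding C'_def using False by auto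
      ultimately show ?thesis using u by metis
    next
      case True
      show ?thesis
      proof (cases "e - {v} = {}")
        case True2: True
        then have "e = {v}" using True by blast
        then show ?thesis by auto
      next
        case False
        let ?e = "e - {v}"
        have fe: "finite ?e" using hE e insert(1) finite_subset by blast
        have eE: "?e \<in> E'" unfolding E'_def using e False by (intro imageI) simp
        have "\<forall>e\<in>E'. \<exists>!x. x \<in> e \<and> C x = Max (C ` e)" using C(1) unfolding um_coloring_def by (rule conjunct2)
        then have u: "\<exists>!x. x \<in> ?e \<and> C x = Max (C ` ?e)" using eE by (rule bspec)
        define m where "m = Max (C ` ?e)"
        have cm: "c \<noteq> m" using c(2) e True False unfolding Fb_def m_def by auto
        have img: "C' ` e = insert c (C ` ?e)" unfolding C'_def using True by auto
        have ag: "\<forall>x\<in>?e. C' x = C x" unfolding C'_def by auto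
        have le: "\<forall>x\<in>?e. C x \<le> m" unfolding m_def using fe by auto
        have Mx: "Max (C' ` e) = max c m" unfolding img m_def using fe False
          by (simp add: Max_insert)
        show ?thesis
        proof (cases "c > m")
          case True3: True
          have "C' v = Max (C' ` e)" using Mx True3 unfolding C'_def by auto
          moreover have "\<forall>x\<in>e. C' x = Max (C' ` e) \<longrightarrow> x = v"
          proof (intro ballI impI)
            fix x assume "x \<in> e" "C' x = Max (C' ` e)"
            show "x = v"
            proof (rule ccontr)
              assume "x \<noteq> v"
              then have "x \<in> ?e" using \<open>x \<in> e\<close> by simp
              then have "C' x \<le> m" using ag le by simp
              then show False using \<open>C' x = Max (C' ` e)\<close> Mx True3 by simp
            qed
          qed
          ultimately show ?thesis using True by blast
        next
          case False3: False
          then have Mm: "Max (C' ` e) = m" using Mx by auto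
          have vn: "C' v \<noteq> m" unfolding C'_def using cm by auto
          from u obtain x where x: "x \<in> ?e" "C x = m" "\<forall>y. y \<in> ?e \<and> C y = m \<longrightarrow> y = x"
            unfolding m_def by blast
          show ?thesis
          proof (rule ex1I[of _ x])
            show "x \<in> e \<and> C' x = Max (C' ` e)" using x ag Mm by auto
          next
            fix y assume "y \<in> e \<and> C' y = Max (C' ` e)"
            then show "y = x" using x ag Mm vn by (cases "y = v") auto
          qed
        qed
      qed
    qed
    show "\<exists>C. um_coloring (insert v F) E C \<and> (\<forall>u\<in>insert v F. C u \<in> L u)"
    proof (intro exI[of _ C'] conjI)
      show "um_coloring (insert v F) E C'"
        unfolding um_coloring_def
      proof (intro conjI)
        show "\<forall>u\<in>insert v F. 0 < C' u" by (rule pos)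
        show "\<forall>e\<in>E. \<exists>!x. x \<in> e \<and> C' x = Max (C' ` e)" by (intro ballI edge)
      qed
      show "\<forall>u\<in>insert v F. C' u \<in> L u" by (rule colors)
    qed
  qed
qed

theorem corollary5p4:
  fixes V :: "'a set" and E :: "'a set set"
  assumes "finite V" and "hypergraph V E"
  shows "um_choosable V E (max_degree V E + 1) \<and> ch_um V E \<le> max_degree V E + 1"
proof -
  have ch: "um_choosable V E (max_degree V E + 1)"
    unfolding um_choosable_def
  proof (intro allI impI)
    fix L :: "'a \<Rightarrow> nat set"
    assume L: "\<forall>v\<in>V. L v \<subseteq> {0<..} \<and> list_size_ge (L v) (max_degree V E + 1)"
    have "\<forall>v\<in>V. card {e\<in>E. v\<in>e} \<le> max_degree V E"
      unfolding max_degree_def using assms(1) by (intro ballI Max_ge) auto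
    then have "\<forall>v\<in>V. L v \<subseteq> {0<..} \<and> (infinite (L v) \<or> card {e\<in>E. v\<in>e} < card (L v))"
      using L unfolding list_size_ge_def by fastforce
    then show "\<exists>C. um_coloring V E C \<and> (\<forall>v\<in>V. C v \<in> L v)"
      using key[OF assms(1)] assms(2) by blast
  qed
  then show ?thesis unfolding ch_um_def by (auto intro: Least_le)
qed

end
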